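(* Let $A,B,M,N,c\in\mathbb{R}$ with $B\neq0$, $c\neq0$, $A^2+4Bc>0$, and suppose $K:=-\frac{6(M+N)}{B}>0$. Set $$\varphi_1=-\frac{A+\sqrt{3(A^2+4Bc)}}{2B},\qquad \varphi_2=-\frac{A-\sqrt{3(A^2+4Bc)}}{2B}.$$ Then for every $C_1\in\mathbb{R}$ and either choice of sign, both $$u(x,y,t)=\varphi_1+\frac{\varphi_2-\varphi_1}{1+\exp\!\left(\mp\frac{\varphi_1-\varphi_2}{\sqrt K}(C_1-x-y+ct)\right)}$$ and $$u(x,y,t)=\varphi_1+\frac{\varphi_2-\varphi_1}{1-\exp\!\left(\mp\frac{\varphi_2-\varphi_1}{\sqrt K}(C_1-x-y+ct)\right)}$$ (the latter where the denominator does not vanish) are solutions of $u_t+Auu_x+Bu^2u_x+Mu_{xxx}+Nu_{xyy}=0$.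
   Context: These families correspond to the case where $P(z)=Bz^4+2Az^3-6cz^2-C_2z+C_3$ has two distinct real double roots $\varphi_1,\varphi_2$, i.e. $C_2=\frac{A(A^2+6Bc)}{B^2}$, $C_3=\frac{(A^2+6Bc)^2}{4B^3}$. *)

theory Defs
  imports "HOL-Analysis.Analysis"
begin

definition pde_solution_on ::
  "real \<Rightarrow> real \<Rightarrow> real \<Rightarrow> real \<Rightarrow> (real \<Rightarrow> real \<Rightarrow> real \<Rightarrow> real) \<Rightarrow> (real \<times> real \<times> real) set \<Rightarrow> bool"
where
  "pde_solution_on A B M N u D \<longleftrightarrow> open D \<and>
    (\<exists>ux uxx uxxx uxy uxyy ut :: real \<Rightarrow> real \<Rightarrow> real \<Rightarrow> real.
      \<forall>x y t. (x, y, t) \<in> D \<longrightarrow>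
        ((\<lambda>s. u s y t) has_real_derivative ux x y t) (at x) \<and>
        ((\<lambda>s. ux s y t) has_real_derivative uxx x y t) (at x) \<and>
        ((\<lambda>s. uxx s y t) has_real_derivative uxxx x y t) (at x) \<and>
        ((\<lambda>s. ux x s t) has_real_derivative uxy x y t) (at y) \<and>
        ((\<lambda>s. uxy x s t) has_real_derivative uxyy x y t) (at y) \<and>
        ((\<lambda>s. u x y s) has_real_derivative ut x y t) (at t) \<and>
        ut x y t + A * u x y t * ux x y t + B * (u x y t)^2 * ux x y t
          + M * uxxx x y t + N * uxyy x y t = 0)"

end

theory Submission
  imports Defs
begin

lemma wave:
  fixes W Fa Ga Gb :: "real \<Rightarrow> real" and S :: "real set"
  assumes S: "open S"
    and W: "\<And>\<xi>. \<xi> \<in> S \<Longrightarrow> (W has_real_derivative Fa (W \<xi>)) (at \<xi>)"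
    and Fa: "\<And>w. (Fa has_real_derivative Ga w) (at w)"
    and Fb: "\<And>w. ((\<lambda>w. Ga w * Fa w) has_real_derivative Gb w) (at w)"
    and eq: "\<And>w. c * Fa w - A * w * Fa w - B * w^2 * Fa w - (M + N) * (Gb w * Fa w) = 0"
  shows "pde_solution_on A B M N (\<lambda>x y t. W (C1 - x - y + c*t)) {(x,y,t). C1 - x - y + c*t \<in> S}"
  unfolding pde_solution_on_def
proof (intro conjI exI allI impI)
  have "{(x,y,t). C1 - x - y + c*t \<in> S} = (\<lambda>p. C1 - fst p - fst (snd p) + c * snd (snd p)) -` S"
    by auto
  moreover have "open ((\<lambda>p. C1 - fst p - fst (snd p) + c * snd (snd p)) -` S)"
    by (rule continuous_open_vimage[OF S]) (intro continuous_intros)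
  ultimately show "open {(x,y,t). C1 - x - y + c*t \<in> S}" by simp
  fix x y t :: real
  assume "(x,y,t) \<in> {(x,y,t). C1 - x - y + c*t \<in> S}"
  hence xi: "C1 - x - y + c*t \<in> S" by simp
  define U where "U = W (C1 - x - y + c*t)"
  have dW: "(W has_real_derivative Fa U) (at (C1 - x - y + c*t))" using W[OF xi] U_def by simp
  have dx: "((\<lambda>s. C1 - s - y + c*t) has_real_derivative -1) (at x)"
    by (auto intro!: derivative_eq_intros)
  have dy: "((\<lambda>s. C1 - x - s + c*t) has_real_derivative -1) (at y)"
    by (auto intro!: derivative_eq_intros)
  have dt: "((\<lambda>r. C1 - x - y + c * r) has_real_derivative c) (at t)"
    by (auto intro!: derivative_eq_intros)
  show "((\<lambda>s. W (C1 - s - y + c*t)) has_real_derivative (\<lambda>x y t. - Fa (W (C1 - x - y + c*t))) x y t) (at x)"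
    using DERIV_chain2[OF dW dx] U_def by simp
  let ?U = "\<lambda>x y t. W (C1 - x - y + c*t)"
  show "((\<lambda>s. (\<lambda>x y t. - Fa (?U x y t)) s y t) has_real_derivative (\<lambda>x y t. Ga (?U x y t) * Fa (?U x y t)) x y t) (at x)"
    using DERIV_minus[OF DERIV_chain2[OF DERIV_chain2[OF Fa dW] dx]] U_def by simp
  show "((\<lambda>s. (\<lambda>x y t. Ga (?U x y t) * Fa (?U x y t)) s y t) has_real_derivative (\<lambda>x y t. - (Gb (?U x y t) * Fa (?U x y t))) x y t) (at x)"
    using DERIV_chain2[OF DERIV_chain2[OF Fb dW] dx] U_def by simp
  show "((\<lambda>s. (\<lambda>x y t. - Fa (?U x y t)) x s t) has_real_derivative (\<lambda>x y t. Ga (?U x y t) * Fa (?U x y t)) x y t) (at y)"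
    using DERIV_minus[OF DERIV_chain2[OF DERIV_chain2[OF Fa dW] dy]] U_def by simp
  show "((\<lambda>s. (\<lambda>x y t. Ga (?U x y t) * Fa (?U x y t)) x s t) has_real_derivative (\<lambda>x y t. - (Gb (?U x y t) * Fa (?U x y t))) x y t) (at y)"
    using DERIV_chain2[OF DERIV_chain2[OF Fb dW] dy] U_def by simp
  show "((\<lambda>s. ?U x y s) has_real_derivative (\<lambda>x y t. Fa (?U x y t) * c) x y t) (at t)"
    using DERIV_chain2[OF dW dt] U_def by simp
  show "(\<lambda>x y t. Fa (?U x y t) * c) x y t + A * ?U x y t * (\<lambda>x y t. - Fa (?U x y t)) x y t + B * (?U x y t)^2 * (\<lambda>x y t. - Fa (?U x y t)) x y t + M * (\<lambda>x y t. - (Gb (?U x y t) * Fa (?U x y t))) x y t + N * (\<lambda>x y t. - (Gb (?U x y t) * Fa (?U x y t))) x y t = 0"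
    using eq[of "?U x y t"] by (simp add: algebra_simps)
qed
lemma logi1:
  fixes p d a \<xi> :: real
  shows "((\<lambda>\<xi>. p + d / (1 + exp (a*d*\<xi>))) has_real_derivative
     a * ((p + d / (1 + exp (a*d*\<xi>))) - p) * ((p + d / (1 + exp (a*d*\<xi>))) - (p + d))) (at \<xi>)"
proof -
  have h: "1 + exp (a*d*\<xi>) \<noteq> 0" by (smt (verit) exp_gt_zero)
  show ?thesis
    apply (rule derivative_eq_intros refl | simp add: h)+
    using h by (simp add: field_simps power2_eq_square)
qed
lemma logi2:
  fixes p d a \<xi> :: real
  assumes h: "1 - exp (a*d*\<xi>) \<noteq> 0"
  shows "((\<lambda>\<xi>. p + d / (1 - exp (a*d*\<xi>))) has_real_derivative
     a * ((p + d / (1 - exp (a*d*\<xi>))) - p) * ((p + d / (1 - exp (a*d*\<xi>))) - (p + d))) (at \<xi>)"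
proof -
  have "((\<lambda>\<xi>. p + d / (1 - exp (a*d*\<xi>))) has_real_derivative
     d * (exp (a*d*\<xi>) * (a*d)) / (1 - exp (a*d*\<xi>))^2) (at \<xi>)"
    by (rule derivative_eq_intros refl h)+ (simp add: power2_eq_square)
  moreover have "d * (exp (a*d*\<xi>) * (a*d)) / (1 - exp (a*d*\<xi>))^2 =
     a * ((p + d / (1 - exp (a*d*\<xi>))) - p) * ((p + d / (1 - exp (a*d*\<xi>))) - (p + d))"
    using h by (simp add: field_simps power2_eq_square)
  ultimately show ?thesis by simp
qed

lemma polyderivs:
  fixes a p q :: real
  shows "((\<lambda>w. a*(w-p)*(w-q)) has_real_derivative a*(2*w-p-q)) (at w)"
    and "((\<lambda>w. a*(2*w-p-q) * (a*(w-p)*(w-q))) has_real_derivative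
            a^2*(6*w^2 - 6*(p+q)*w + p^2 + 4*p*q + q^2)) (at w)"
  by (auto intro!: derivative_eq_intros simp: algebra_simps power2_eq_square)

theorem mainTheorem6:
  fixes A B M N c C\<^sub>1 \<sigma> :: real
  assumes "B \<noteq> 0" and "c \<noteq> 0" and "A^2 + 4 * B * c > 0"
    and "- (6 * (M + N)) / B > 0"
    and "\<sigma> = 1 \<or> \<sigma> = -1"
  defines "K \<equiv> - (6 * (M + N)) / B"
    and "\<phi>\<^sub>1 \<equiv> - (A + sqrt (3 * (A^2 + 4 * B * c))) / (2 * B)"
    and "\<phi>\<^sub>2 \<equiv> - (A - sqrt (3 * (A^2 + 4 * B * c))) / (2 * B)"
  shows "pde_solution_on A B M N
           (\<lambda>x y t. \<phi>\<^sub>1 + (\<phi>\<^sub>2 - \<phi>\<^sub>1) /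
              (1 + exp (\<sigma> * ((\<phi>\<^sub>1 - \<phi>\<^sub>2) / sqrt K) * (C\<^sub>1 - x - y + c * t)))) UNIV
       \<and> pde_solution_on A B M N
           (\<lambda>x y t. \<phi>\<^sub>1 + (\<phi>\<^sub>2 - \<phi>\<^sub>1) /
              (1 - exp (\<sigma> * ((\<phi>\<^sub>2 - \<phi>\<^sub>1) / sqrt K) * (C\<^sub>1 - x - y + c * t))))
           {(x, y, t). 1 - exp (\<sigma> * ((\<phi>\<^sub>2 - \<phi>\<^sub>1) / sqrt K) * (C\<^sub>1 - x - y + c * t)) \<noteq> 0}"
proof -
  define r where "r = sqrt (3 * (A^2 + 4 * B * c))"
  have r2: "r^2 = 3 * (A^2 + 4 * B * c)" unfolding r_def using assms(3) by simp
  have Kpos: "K > 0" using assms(4) K_def by simp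
  have sK2: "(sqrt K)^2 = K" using Kpos by simp
  have sKne: "sqrt K \<noteq> 0" using Kpos by simp
  have hs: "B * (\<phi>\<^sub>1 + \<phi>\<^sub>2) = - A" unfolding \<phi>\<^sub>1_def \<phi>\<^sub>2_def using assms(1)
    by (simp add: field_simps)
  have hq: "B * (\<phi>\<^sub>1^2 + 4*\<phi>\<^sub>1*\<phi>\<^sub>2 + \<phi>\<^sub>2^2) = - 6 * c"
  proof -
    have "B * (\<phi>\<^sub>1^2 + 4*\<phi>\<^sub>1*\<phi>\<^sub>2 + \<phi>\<^sub>2^2) = (6*A^2 - 2*r^2) / (4*B)"
      unfolding \<phi>\<^sub>1_def \<phi>\<^sub>2_def r_def[symmetric] using assms(1)
      by (simp add: field_simps power2_eq_square)
    also have "\<dots> = - 6 * c" using r2 assms(1) by (simp add: field_simps)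
    finally show ?thesis .
  qed
  have hKB: "K * B = - 6 * (M + N)" unfolding K_def using assms(1) by simp
  have alg: "c * (a*(w-\<phi>\<^sub>1)*(w-\<phi>\<^sub>2)) - A * w * (a*(w-\<phi>\<^sub>1)*(w-\<phi>\<^sub>2))
      - B * w^2 * (a*(w-\<phi>\<^sub>1)*(w-\<phi>\<^sub>2))
      - (M + N) * (a^2*(6*w^2 - 6*(\<phi>\<^sub>1+\<phi>\<^sub>2)*w + \<phi>\<^sub>1^2 + 4*\<phi>\<^sub>1*\<phi>\<^sub>2 + \<phi>\<^sub>2^2)
          * (a*(w-\<phi>\<^sub>1)*(w-\<phi>\<^sub>2))) = 0"
    if a2: "a^2 * K = 1" for a w
  proof -
    have hm: "(M + N) * a^2 = - B / 6"
    proof -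
      have "(M + N) * a^2 * 6 = - K * B * a^2" using hKB by simp
      also have "\<dots> = - B" using a2 by (simp add: algebra_simps)
      finally show ?thesis by simp
    qed
    have "(M + N) * (a^2*(6*w^2 - 6*(\<phi>\<^sub>1+\<phi>\<^sub>2)*w + \<phi>\<^sub>1^2 + 4*\<phi>\<^sub>1*\<phi>\<^sub>2 + \<phi>\<^sub>2^2))
        = ((M + N) * a^2) * (6*w^2 - 6*(\<phi>\<^sub>1+\<phi>\<^sub>2)*w + \<phi>\<^sub>1^2 + 4*\<phi>\<^sub>1*\<phi>\<^sub>2 + \<phi>\<^sub>2^2)"
      by (simp add: algebra_simps)
    also have "\<dots> = - B * w^2 + (B * (\<phi>\<^sub>1+\<phi>\<^sub>2)) * w - (B * (\<phi>\<^sub>1^2 + 4*\<phi>\<^sub>1*\<phi>\<^sub>2 + \<phi>\<^sub>2^2)) / 6"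
      unfolding hm by (simp add: algebra_simps)
    also have "\<dots> = - B * w^2 - A * w + c" unfolding hs hq by simp
    finally have e: "(M + N) * (a^2*(6*w^2 - 6*(\<phi>\<^sub>1+\<phi>\<^sub>2)*w + \<phi>\<^sub>1^2 + 4*\<phi>\<^sub>1*\<phi>\<^sub>2 + \<phi>\<^sub>2^2))
        = - B * w^2 - A * w + c" .
    have "c * (a*(w-\<phi>\<^sub>1)*(w-\<phi>\<^sub>2)) - A * w * (a*(w-\<phi>\<^sub>1)*(w-\<phi>\<^sub>2))
      - B * w^2 * (a*(w-\<phi>\<^sub>1)*(w-\<phi>\<^sub>2))
      - (M + N) * (a^2*(6*w^2 - 6*(\<phi>\<^sub>1+\<phi>\<^sub>2)*w + \<phi>\<^sub>1^2 + 4*\<phi>\<^sub>1*\<phi>\<^sub>2 + \<phi>\<^sub>2^2)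
          * (a*(w-\<phi>\<^sub>1)*(w-\<phi>\<^sub>2)))
      = (a*(w-\<phi>\<^sub>1)*(w-\<phi>\<^sub>2)) * (c - A * w - B * w^2
          - (M + N) * (a^2*(6*w^2 - 6*(\<phi>\<^sub>1+\<phi>\<^sub>2)*w + \<phi>\<^sub>1^2 + 4*\<phi>\<^sub>1*\<phi>\<^sub>2 + \<phi>\<^sub>2^2)))"
      by (simp add: algebra_simps)
    also have "\<dots> = 0" unfolding e by simp
    finally show ?thesis .
  qed
  have sig2: "\<sigma>^2 = 1" using assms(5) by auto
  define d where "d = \<phi>\<^sub>2 - \<phi>\<^sub>1"
  have p2: "\<phi>\<^sub>1 + d = \<phi>\<^sub>2" unfolding d_def by simp
  define a1 where "a1 = - \<sigma> / sqrt K"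
  have a1sq: "a1^2 * K = 1" unfolding a1_def using sig2 sK2 sKne
    by (simp add: power_divide)
  have k1: "a1 * d = \<sigma> * ((\<phi>\<^sub>1 - \<phi>\<^sub>2) / sqrt K)" unfolding a1_def d_def using sKne by (simp add: field_simps)
  have P1: "pde_solution_on A B M N
      (\<lambda>x y t. (\<lambda>\<xi>. \<phi>\<^sub>1 + d / (1 + exp (a1*d*\<xi>))) (C\<^sub>1 - x - y + c*t))
      {(x,y,t). C\<^sub>1 - x - y + c*t \<in> UNIV}"
    apply (rule wave[where Fa="\<lambda>w. a1*(w-\<phi>\<^sub>1)*(w-\<phi>\<^sub>2)" and Ga="\<lambda>w. a1*(2*w-\<phi>\<^sub>1-\<phi>\<^sub>2)"
          and Gb="\<lambda>w. a1^2*(6*w^2 - 6*(\<phi>\<^sub>1+\<phi>\<^sub>2)*w + \<phi>\<^sub>1^2 + 4*\<phi>\<^sub>1*\<phi>\<^sub>2 + \<phi>\<^sub>2^2)"])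
    using logi1[of \<phi>\<^sub>1 d a1] p2 polyderivs alg[OF a1sq] by auto
  define a2 where "a2 = \<sigma> / sqrt K"
  have a2sq: "a2^2 * K = 1" unfolding a2_def using sig2 sK2 sKne
    by (simp add: power_divide)
  have k2: "a2 * d = \<sigma> * ((\<phi>\<^sub>2 - \<phi>\<^sub>1) / sqrt K)" unfolding a2_def d_def using sKne by (simp add: field_simps)
  have P2: "pde_solution_on A B M N
      (\<lambda>x y t. (\<lambda>\<xi>. \<phi>\<^sub>1 + d / (1 - exp (a2*d*\<xi>))) (C\<^sub>1 - x - y + c*t))
      {(x,y,t). C\<^sub>1 - x - y + c*t \<in> {\<xi>. 1 - exp (a2*d*\<xi>) \<noteq> 0}}"
    apply (rule wave[where Fa="\<lambda>w. a2*(w-\<phi>\<^sub>1)*(w-\<phi>\<^sub>2)" and Ga="\<lambda>w. a2*(2*w-\<phi>\<^sub>1-\<phi>\<^sub>2)"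
          and Gb="\<lambda>w. a2^2*(6*w^2 - 6*(\<phi>\<^sub>1+\<phi>\<^sub>2)*w + \<phi>\<^sub>1^2 + 4*\<phi>\<^sub>1*\<phi>\<^sub>2 + \<phi>\<^sub>2^2)"])
    subgoal
    proof -
      have "{\<xi>::real. 1 - exp (a2*d*\<xi>) \<noteq> 0} = (\<lambda>\<xi>. 1 - exp (a2*d*\<xi>)) -` (- {0})" by auto
      moreover have "open ((\<lambda>\<xi>::real. 1 - exp (a2*d*\<xi>)) -` (- {0}))"
        by (rule continuous_open_vimage) (auto intro!: continuous_intros)
      ultimately show ?thesis by simp
    qed
    using logi2[of a2 d _ \<phi>\<^sub>1] p2 polyderivs alg[OF a2sq] by auto
  have E1: "(\<lambda>x y t. (\<lambda>\<xi>. \<phi>\<^sub>1 + d / (1 + exp (a1*d*\<xi>))) (C\<^sub>1 - x - y + c*t))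
     = (\<lambda>x y t. \<phi>\<^sub>1 + (\<phi>\<^sub>2 - \<phi>\<^sub>1) /
              (1 + exp (\<sigma> * ((\<phi>\<^sub>1 - \<phi>\<^sub>2) / sqrt K) * (C\<^sub>1 - x - y + c * t))))"
    unfolding k1 unfolding d_def by (rule refl)
  have S1: "{(x,y,t). C\<^sub>1 - x - y + c*t \<in> (UNIV::real set)} = UNIV" by auto
  have E2: "(\<lambda>x y t. (\<lambda>\<xi>. \<phi>\<^sub>1 + d / (1 - exp (a2*d*\<xi>))) (C\<^sub>1 - x - y + c*t))
     = (\<lambda>x y t. \<phi>\<^sub>1 + (\<phi>\<^sub>2 - \<phi>\<^sub>1) /
              (1 - exp (\<sigma> * ((\<phi>\<^sub>2 - \<phi>\<^sub>1) / sqrt K) * (C\<^sub>1 - x - y + c * t))))"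
    unfolding k2 unfolding d_def by (rule refl)
  have S2: "{(x,y,t). C\<^sub>1 - x - y + c*t \<in> {\<xi>. 1 - exp (a2*d*\<xi>) \<noteq> 0}}
      = {(x, y, t). 1 - exp (\<sigma> * ((\<phi>\<^sub>2 - \<phi>\<^sub>1) / sqrt K) * (C\<^sub>1 - x - y + c * t)) \<noteq> 0}"
    unfolding k2 unfolding d_def by auto
  show ?thesis
    using P1 P2 unfolding E1 S1 E2 S2 by (rule conjI)
qed

end
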